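(* For all $n\ge1$, in $\mathcal Z^{\mathfrak f}$: $\zeta^{\mathfrak f}((x_0x_1)^nx_0)=-2\sum_{i=0}^{n-1}\zeta^{\mathfrak f}(\{2\}^i,3,\{2\}^{n-1-i})=2\sum_{i=1}^n(-1)^i\zeta^{\mathfrak f}(2i+1)\,\zeta^{\mathfrak f}(\{2\}^{n-i})$.
   Context: Formal MZVs: $\mathcal X=\{x_0,x_1\}$, $\mathbb Q\langle\mathcal X\rangle$ free noncommutative polynomials, $ш$ shuffle product ($\mathbf1шw=wш\mathbf1=w$, $auшbv=a(uшbv)+b(auшv)$). $\mathcal Z^{\mathfrak f}=(\mathbb Q\langle\mathcal X\rangle,ш)/R$, $R$ the ideal generated by $x_0,x_1$ and $uш v-\iota(\iota^{-1}(u)*\iota^{-1}(v))$ for $u\in\mathbb Q\mathbf1+x_0\mathbb Q\langle\mathcal X\rangle x_1$, $v\in\mathbb Q\mathbf1+\mathbb Q\langle\mathcal X\rangle x_1$, with $\iota(y_{k_1}\cdots y_{k_d})=x_0^{k_1-1}x_1\cdots x_0^{k_d-1}x_1$ and $*$ the stuffle product on $\mathbb Q\langle y_1,y_2,\dots\rangle$ ($y_iu*y_jv=y_i(u*y_jv)+y_j(y_iu*v)+y_{i+j}(u*v)$). $\zeta^{\mathfrak f}(w)$ is the class of the word $w$, $\zeta^{\mathfrak f}(k_1,\dots,k_d)=\zeta^{\mathfrak f}(x_0^{k_1-1}x_1\cdots x_0^{k_d-1}x_1)$, $\{2\}^m$ denotes $m$ entries equal to $2$, $\zeta^{\mathfrak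 f}(\{2\}^0)=1$. *)

theory Defs
  imports Complex_Main "HOL-Library.Function_Algebras"
begin

datatype letter = X0 | X1

text \<open>Elements of Q<X> are finitely supported functions from words to rationals;
  addition/subtraction/sums are pointwise.\<close>
type_synonym poly = "letter list \<Rightarrow> rat"

definition fin_supp :: "poly \<Rightarrow> bool" where
  "fin_supp p \<longleftrightarrow> finite {w. p w \<noteq> 0}"

definition wp :: "letter list \<Rightarrow> poly" where
  "wp w = (\<lambda>v. if v = w then 1 else 0)"

definition smul :: "rat \<Rightarrow> poly \<Rightarrow> poly" where
  "smul c p = (\<lambda>w. c * p w)"

text \<open>shc u v w = coefficient of the word w in the shuffle u sh v of words,
  following 1 sh w = w sh 1 = w and au sh bv = a(u sh bv) + b(au sh v).\<close>
fun shc :: "letter list \<Rightarrow> letter list \<Rightarrow> letter list \<Rightarrow> nat" where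
  "shc [] v w = (if v = w then 1 else 0)"
| "shc (a#u) [] w = (if a#u = w then 1 else 0)"
| "shc (a#u) (b#v) [] = 0"
| "shc (a#u) (b#v) (c#w) =
     (if c = a then shc u (b#v) w else 0) + (if c = b then shc (a#u) v w else 0)"

definition sh :: "poly \<Rightarrow> poly \<Rightarrow> poly" where
  "sh p q = (\<lambda>w. \<Sum>(u,v)\<in>{(u,v). length u + length v = length w}.
                  p u * q v * of_nat (shc u v w))"

text \<open>Stuffle on words in y_1,y_2,...; a word y_{k1}...y_{kd} is the list [k1,...,kd].
  stc a b c = coefficient of c in a * b, following
  y_i u * y_j v = y_i(u * y_j v) + y_j(y_i u * v) + y_{i+j}(u * v).\<close>
fun stc :: "nat list \<Rightarrow> nat list \<Rightarrow> nat list \<Rightarrow> nat" where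
  "stc [] v w = (if v = w then 1 else 0)"
| "stc (i#u) [] w = (if i#u = w then 1 else 0)"
| "stc (i#u) (j#v) [] = 0"
| "stc (i#u) (j#v) (k#w) =
     (if k = i then stc u (j#v) w else 0) + (if k = j then stc (i#u) v w else 0)
     + (if k = i + j then stc u v w else 0)"

definition pos_word :: "nat list \<Rightarrow> bool" where
  "pos_word ks \<longleftrightarrow> (\<forall>k\<in>set ks. k \<ge> 1)"

definition iota :: "nat list \<Rightarrow> letter list" where
  "iota ks = concat (map (\<lambda>k. replicate (k - 1) X0 @ [X1]) ks)"

definition iota_stuffle :: "nat list \<Rightarrow> nat list \<Rightarrow> poly" where
  "iota_stuffle a b = (\<lambda>w. \<Sum>c\<in>{c. pos_word c \<and> iota c = w}. of_nat (stc a b c))"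

text \<open>The linear generators u sh v - iota(iota^-1 u * iota^-1 v)
  with u in Q1 + x0 Q<X> x1, v in Q1 + Q<X> x1 are spanned by those with u,v words,
  i.e. u = iota a (a empty or first entry >= 2) and v = iota b.\<close>
inductive_set R :: "poly set" where
  gen_x0: "wp [X0] \<in> R"
| gen_x1: "wp [X1] \<in> R"
| gen_st: "\<lbrakk>pos_word a; pos_word b; a = [] \<or> hd a \<ge> 2\<rbrakk> \<Longrightarrow>
           sh (wp (iota a)) (wp (iota b)) - iota_stuffle a b \<in> R"
| zero: "0 \<in> R"
| add: "\<lbrakk>p \<in> R; q \<in> R\<rbrakk> \<Longrightarrow> p + q \<in> R"
| scal: "p \<in> R \<Longrightarrow> smul c p \<in> R"
| mult: "\<lbrakk>p \<in> R; fin_supp q\<rbrakk> \<Longrightarrow> sh q p \<in> R"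

text \<open>Equality in Z^f = (Q<X>, sh)/R.\<close>
definition zeq :: "poly \<Rightarrow> poly \<Rightarrow> bool" where
  "zeq p q \<longleftrightarrow> p - q \<in> R"

text \<open>zeta^f(k1,...,kd) as (a representative of) the class of iota [k1,...,kd].\<close>
definition zf :: "nat list \<Rightarrow> poly" where
  "zf ks = wp (iota ks)"

end

theory Submission
  imports Defs
begin


lemma sum_app: "(\<Sum>i\<in>A. f i) (x::'b) = (\<Sum>i\<in>A. (f i x :: 'c::comm_monoid_add))"
  by (induction A rule: infinite_finite_induct) (auto simp: zero_fun_def plus_fun_def)

lemma finite_pairs: "finite {(u::letter list,v::letter list). length u + length v = n}"
proof -
  have U: "(UNIV::letter set) = {X0,X1}" using letter.exhaust by auto
  have f: "finite {xs::letter list. set xs \<subseteq> UNIV \<and> length xs \<le> n}"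
    by (rule finite_lists_length_le) (simp add: U)
  show ?thesis
    by (rule finite_subset[of _ "{xs::letter list. set xs \<subseteq> UNIV \<and> length xs \<le> n} \<times> {xs::letter list. set xs \<subseteq> UNIV \<and> length xs \<le> n}"]) (use f in auto)
qed

lemma shc_len: "shc u v w \<noteq> 0 \<Longrightarrow> length u + length v = length w"
  by (induction u v w rule: shc.induct) (auto split: if_splits)

lemma sh_wp: "sh (wp u) (wp v) = (\<lambda>w. of_nat (shc u v w))"
proof
  fix w
  have "sh (wp u) (wp v) w = (\<Sum>p\<in>{(u,v). length u + length v = length w}.
           (if p = (u,v) then of_nat (shc u v w) else 0))"
    unfolding sh_def by (intro sum.cong) (auto simp: wp_def split: if_splits)
  also have "\<dots> = of_nat (shc u v w)"
    using finite_pairs[of "length w"] shc_len[of u v w] by (auto simp: sum.delta')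
  finally show "sh (wp u) (wp v) w = of_nat (shc u v w)" .
qed

lemma shc_nil2[simp]: "shc u [] w = (if u = w then 1 else 0)"
  by (cases u) auto

lemma shc_single: "shc u [a] w = (\<Sum>j\<le>length u. if w = take j u @ a # drop j u then 1 else 0)"
proof (induction u arbitrary: w)
  case Nil
  then show ?case by auto
next
  case (Cons x u)
  show ?case
  proof (cases w)
    case Nil
    then show ?thesis by simp
  next
    case (Cons c w')
    have e: "shc (x#u) [a] w = (if c = x then shc u [a] w' else 0) + (if c = a \<and> x#u = w' then 1 else 0)"
      unfolding Cons by simp
    have r: "(\<Sum>j\<le>length (x#u). if w = take j (x#u) @ a # drop j (x#u) then 1 else 0)
       = (if c = a \<and> w' = x#u then 1 else 0) + (\<Sum>j\<le>length u. if c = x \<and> w' = take j u @ a # drop j u then 1 else 0)"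
      unfolding Cons by (simp only: length_Cons sum.atMost_Suc_shift) simp
    have r2: "(\<Sum>j\<le>length u. if c = x \<and> w' = take j u @ a # drop j u then 1 else 0) = (if c = x then (\<Sum>j\<le>length u. if w' = take j u @ a # drop j u then 1 else 0) else (0::nat))"
      by (cases "c = x") auto
    show ?thesis unfolding e r r2 Cons.IH[of w'] by (simp add: conj_commute eq_commute)
  qed
qed

lemma stc_nil2[simp]: "stc u [] w = (if u = w then 1 else 0)"
  by (cases u) auto

lemma stc_single: "stc [k] v c = (\<Sum>j\<le>length v. if c = take j v @ k # drop j v then 1 else 0)
   + (\<Sum>j<length v. if c = take j v @ (k + v!j) # drop (Suc j) v then 1 else 0)"
proof (induction v arbitrary: c)
  case Nil
  then show ?case by auto
next
  case (Cons x v)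
  show ?case
  proof (cases c)
    case Nil
    then show ?thesis by simp
  next
    case (Cons y c')
    have e: "stc [k] (x#v) c = (if y = k \<and> c' = x#v then 1 else 0) + (if y = x then stc [k] v c' else 0)
        + (if y = k + x \<and> c' = v then 1 else 0)"
      unfolding Cons by auto
    have r: "(\<Sum>j\<le>length (x#v). if c = take j (x#v) @ k # drop j (x#v) then 1 else 0)
       = (if y = k \<and> c' = x#v then 1 else 0) + (\<Sum>j\<le>length v. if y = x \<and> c' = take j v @ k # drop j v then 1 else (0::nat))"
      unfolding Cons by (simp only: length_Cons sum.atMost_Suc_shift) simp
    have r': "(\<Sum>j<length (x#v). if c = take j (x#v) @ (k + (x#v)!j) # drop (Suc j) (x#v) then 1 else 0)
       = (if y = k + x \<and> c' = v then 1 else 0) + (\<Sum>j<length v. if y = x \<and> c' = take j v @ (k + v!j) # drop (Suc j) v then 1 else (0::nat))"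
      unfolding Cons by (simp only: length_Cons sum.lessThan_Suc_shift) simp
    have r2: "(\<Sum>j\<le>length v. if y = x \<and> c' = take j v @ k # drop j v then 1 else 0) = (if y = x then (\<Sum>j\<le>length v. if c' = take j v @ k # drop j v then 1 else 0) else (0::nat))"
      by (cases "y = x") auto
    have r2': "(\<Sum>j<length v. if y = x \<and> c' = take j v @ (k + v!j) # drop (Suc j) v then 1 else 0) = (if y = x then (\<Sum>j<length v. if c' = take j v @ (k + v!j) # drop (Suc j) v then 1 else 0) else (0::nat))"
      by (cases "y = x") auto
    show ?thesis unfolding e r r' r2 r2' Cons.IH[of c'] by simp
  qed
qed


lemma iota_Nil[simp]: "iota [] = []" by (simp add: iota_def)
lemma iota_Cons[simp]: "iota (k#c) = replicate (k-1) X0 @ X1 # iota c" by (simp add: iota_def)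
lemma iota_append[simp]: "iota (a @ b) = iota a @ iota b" by (simp add: iota_def)

lemma rep_X1: "replicate a X0 @ X1 # s = replicate b X0 @ X1 # t \<longleftrightarrow> a = b \<and> s = t"
proof (induction a arbitrary: b)
  case 0 then show ?case by (cases b) auto
next
  case (Suc a) then show ?case by (cases b) auto
qed

lemma iota_inj: "pos_word c \<Longrightarrow> pos_word d \<Longrightarrow> iota c = iota d \<Longrightarrow> c = d"
proof (induction c arbitrary: d)
  case Nil then show ?case by (cases d) auto
next
  case (Cons k c)
  show ?case
  proof (cases d)
    case Nil then show ?thesis using Cons.prems by simp
  next
    case (Cons k' d')
    have h: "k - 1 = k' - 1 \<and> iota c = iota d'"
      using Cons.prems(3) unfolding Cons iota_Cons rep_X1 .
    have p: "k \<ge> 1" "k' \<ge> 1" "pos_word c" "pos_word d'"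
      using Cons.prems(1,2) unfolding Cons by (auto simp: pos_word_def)
    have "c = d'" using Cons.IH[OF p(3) p(4)] h by blast
    then show ?thesis unfolding Cons using h p by simp
  qed
qed

lemma Cw_finite: "finite {c. pos_word c \<and> iota c = w}"
proof (cases "\<exists>c. pos_word c \<and> iota c = w")
  case True
  then obtain c0 where c0: "pos_word c0" "iota c0 = w" by blast
  have "{c. pos_word c \<and> iota c = w} \<subseteq> {c0}" using c0 iota_inj by auto
  then show ?thesis using finite_subset by blast
next
  case False
  then have "{c. pos_word c \<and> iota c = w} = {}" by auto
  then show ?thesis by (metis finite.emptyI)
qed

lemma Cw_delta: "pos_word d \<Longrightarrow> (\<Sum>c\<in>{c. pos_word c \<and> iota c = w}. (if c = d then 1 else 0)::rat) = wp (iota d) w"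
  using Cw_finite[of w] by (simp add: sum.delta' wp_def eq_commute)

lemma iota_stuffle_single:
  assumes "pos_word v" "k \<ge> 1"
  shows "iota_stuffle [k] v = (\<Sum>j\<le>length v. wp (iota (take j v @ k # drop j v)))
     + (\<Sum>j<length v. wp (iota (take j v @ (k + v!j) # drop (Suc j) v)))"
proof
  fix w
  have pA: "pos_word (take j v @ k # drop j v)" for j
    using assms by (auto simp: pos_word_def dest: in_set_takeD in_set_dropD)
  have pB: "pos_word (take j v @ (k + v!j) # drop (Suc j) v)" for j
    using assms by (auto simp: pos_word_def dest: in_set_takeD in_set_dropD)
  let ?C = "{c. pos_word c \<and> iota c = w}"
  have "iota_stuffle [k] v w = (\<Sum>c\<in>?C. (\<Sum>j\<le>length v. if c = take j v @ k # drop j v then 1 else 0)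
   + (\<Sum>j<length v. if c = take j v @ (k + v!j) # drop (Suc j) v then 1 else (0::rat)))"
    unfolding iota_stuffle_def stc_single by (simp add: of_nat_sum if_distrib cong: if_cong)
  also have "\<dots> = (\<Sum>j\<le>length v. \<Sum>c\<in>?C. if c = take j v @ k # drop j v then 1 else 0)
     + (\<Sum>j<length v. \<Sum>c\<in>?C. if c = take j v @ (k + v!j) # drop (Suc j) v then 1 else (0::rat))"
    by (simp only: sum.distrib) (rule arg_cong2[where f="(+)"]; rule sum.swap)
  also have "\<dots> = (\<Sum>j\<le>length v. wp (iota (take j v @ k # drop j v)) w)
     + (\<Sum>j<length v. wp (iota (take j v @ (k + v!j) # drop (Suc j) v)) w)"
    using Cw_delta pA pB by simp
  finally show "iota_stuffle [k] v w = ((\<Sum>j\<le>length v. wp (iota (take j v @ k # drop j v)))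
     + (\<Sum>j<length v. wp (iota (take j v @ (k + v!j) # drop (Suc j) v)))) w"
    by (simp add: sum_app)
qed



lemma zeq_refl: "zeq p p" by (simp add: zeq_def R.zero)
lemma smul_diff: "smul c p - smul c q = smul c (p - q)"
  by (rule ext) (simp add: smul_def algebra_simps)
lemma zeq_smul: "zeq p q \<Longrightarrow> zeq (smul c p) (smul c q)"
  unfolding zeq_def smul_diff by (rule R.scal)
lemma zeq_sym: "zeq p q \<Longrightarrow> zeq q p"
proof -
  assume "zeq p q"
  then have "smul (-1) (p - q) \<in> R" unfolding zeq_def by (rule R.scal)
  moreover have "smul (-1) (p - q) = q - p" by (rule ext) (simp add: smul_def)
  ultimately show ?thesis by (simp add: zeq_def)
qed
lemma zeq_add: "zeq p q \<Longrightarrow> zeq p' q' \<Longrightarrow> zeq (p + p') (q + q')"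
proof -
  assume "zeq p q" "zeq p' q'"
  then have "(p - q) + (p' - q') \<in> R" unfolding zeq_def by (rule R.add)
  moreover have "(p - q) + (p' - q') = (p + p') - (q + q')" by (simp add: algebra_simps)
  ultimately show ?thesis by (simp add: zeq_def)
qed
lemma zeq_trans: "zeq p q \<Longrightarrow> zeq q r \<Longrightarrow> zeq p r"
proof -
  assume "zeq p q" "zeq q r"
  then have "(p - q) + (q - r) \<in> R" unfolding zeq_def by (rule R.add)
  then show ?thesis by (simp add: zeq_def)
qed
lemma zeq_sum: "(\<And>i. i \<in> I \<Longrightarrow> zeq (f i) (g i)) \<Longrightarrow> zeq (\<Sum>i\<in>I. f i) (\<Sum>i\<in>I. g i)"
proof (induction I rule: infinite_finite_induct)
  case (infinite A) then show ?case by (simp add: zeq_refl)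
next
  case empty then show ?case by (simp add: zeq_refl)
next
  case (insert x F)
  have "zeq (f x + sum f F) (g x + sum g F)" by (rule zeq_add) (use insert in auto)
  then show ?case by (simp only: sum.insert[OF insert(1,2)])
qed

lemma fin_supp_wp: "fin_supp (wp w)"
proof -
  have "{v. wp w v \<noteq> 0} = {w}" by (auto simp: wp_def)
  then show ?thesis by (simp add: fin_supp_def)
qed

lemma sh_single: "sh (wp u) (wp [a]) = (\<Sum>j\<le>length u. wp (take j u @ a # drop j u))"
  unfolding sh_wp by (rule ext) (auto simp: shc_single sum_app of_nat_sum wp_def intro!: sum.cong)

abbreviation P :: "nat \<Rightarrow> letter list" where "P i \<equiv> concat (replicate i [X0, X1])"

lemma len_P: "length (P i) = 2 * i" by (induction i) auto

lemma P_split: "i < n \<Longrightarrow> P n = P i @ X0 # X1 # P (n - 1 - i)"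
proof -
  assume "i < n"
  then obtain m where n: "n = i + Suc m" by (metis add_Suc_right less_imp_Suc_add)
  show ?thesis unfolding n by (simp only: replicate_add concat_append replicate_Suc concat.simps) simp
qed

lemma iota_rep2: "iota (replicate i 2) = P i" by (simp add: iota_def map_replicate)

lemma iota_word: "iota (replicate i 2 @ [3] @ replicate m 2) = P i @ [X0, X0, X1] @ P m"
  by (simp only: iota_append iota_rep2) (simp add: eval_nat_numeral)

lemma sum_even_odd: "(\<Sum>j<2*(n::nat). g j) = (\<Sum>i<n. g (2*i) + g (2*i+1))"
  by (induction n) (auto simp: sum.distrib add_ac)

lemma part1:
  assumes "n \<ge> 1"
  shows "zeq (wp (concat (replicate n [X0, X1]) @ [X0]))
             (smul (-2) (\<Sum>i<n. zf (replicate i 2 @ [3] @ replicate (n - 1 - i) 2)))"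
proof -
  let ?Z = "\<lambda>i. zf (replicate i 2 @ [3] @ replicate (n - 1 - i) 2)"
  let ?g = "\<lambda>j. wp (take j (P n) @ X0 # drop j (P n))"
  have Zi: "?Z i = wp (P i @ [X0,X0,X1] @ P (n-1-i))" for i
    by (simp only: zf_def iota_word)
  have g1: "?g (2*i) = ?Z i" if "i < n" for i
    unfolding Zi using P_split[OF that] len_P[of i] by simp
  have g2: "?g (2*i+1) = ?Z i" if "i < n" for i
    unfolding Zi using P_split[OF that] len_P[of i] by simp
  have "sh (wp (P n)) (wp [X0]) = ?g (2*n) + (\<Sum>j<2*n. ?g j)"
    unfolding sh_single len_P by (simp add: sum.atMost_Suc lessThan_Suc_atMost[symmetric] add.commute)
  also have "\<dots> = wp (P n @ [X0]) + (\<Sum>i<n. ?Z i + ?Z i)"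
    unfolding sum_even_odd using g1 g2 len_P[of n] by simp
  finally have e: "sh (wp (P n)) (wp [X0]) = wp (P n @ [X0]) + (\<Sum>i<n. ?Z i + ?Z i)" .
  have "sh (wp (P n)) (wp [X0]) \<in> R" by (rule R.mult[OF R.gen_x0 fin_supp_wp])
  moreover have "wp (P n @ [X0]) - smul (-2) (\<Sum>i<n. ?Z i) = sh (wp (P n)) (wp [X0])"
    unfolding e by (rule ext) (simp add: smul_def sum_app sum.distrib sum_distrib_left[symmetric])
  ultimately show ?thesis by (simp add: zeq_def)
qed



definition SS :: "nat \<Rightarrow> nat \<Rightarrow> poly" where
  "SS k m = (\<Sum>j\<le>m. zf (replicate j 2 @ [k] @ replicate (m - j) 2))"
definition BB :: "nat \<Rightarrow> nat \<Rightarrow> poly" where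
  "BB k m = (\<Sum>j<m. zf (replicate j 2 @ [k] @ replicate (m - Suc j) 2))"

lemma BB_0: "BB k 0 = 0" by (simp add: BB_def)
lemma BB_SS: "m \<ge> 1 \<Longrightarrow> BB k m = SS k (m - 1)"
proof -
  assume "m \<ge> 1"
  then obtain m' where m: "m = Suc m'" by (cases m) auto
  show ?thesis unfolding m BB_def SS_def lessThan_Suc_atMost by simp
qed

lemma pos_rep2: "pos_word (replicate m 2)" by (simp add: pos_word_def)

lemma stuffle_rep:
  assumes "k \<ge> 1"
  shows "iota_stuffle [k] (replicate m 2) = SS k m + BB (k+2) m"
proof -
  have "iota_stuffle [k] (replicate m 2) = (\<Sum>j\<le>m. wp (iota (take j (replicate m 2) @ k # drop j (replicate m 2))))
     + (\<Sum>j<m. wp (iota (take j (replicate m 2) @ (k + (replicate m 2)!j) # drop (Suc j) (replicate m 2))))"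
    using iota_stuffle_single[OF pos_rep2 assms, of m] by simp
  also have "\<dots> = SS k m + BB (k+2) m"
    unfolding SS_def BB_def zf_def
    by (intro arg_cong2[where f="(+)"] sum.cong) (auto simp: min_def)
  finally show ?thesis .
qed

lemma zeq_st:
  assumes "i \<ge> 1"
  shows "zeq (sh (zf [2*i+1]) (zf (replicate m 2))) (SS (2*i+1) m + BB (2*i+3) m)"
proof -
  have "sh (wp (iota [2*i+1])) (wp (iota (replicate m 2))) - iota_stuffle [2*i+1] (replicate m 2) \<in> R"
    by (rule R.gen_st) (use assms in \<open>auto simp: pos_word_def\<close>)
  moreover have "iota_stuffle [2*i+1] (replicate m 2) = SS (2*i+1) m + BB (2*i+3) m"
  proof -
    have eq: "(2*i+1)+2 = 2*i+3" by simp
    show ?thesis using stuffle_rep[of "2*i+1" m, OF le_add2] by (simp only: eq)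
  qed
  ultimately show ?thesis by (simp add: zeq_def zf_def)
qed

lemma tele: "(\<Sum>i=1..N. (-1)^i * (F i + F (Suc i)) :: rat) = - F 1 + (-1)^N * F (Suc N)"
  by (induction N) (auto simp: algebra_simps)

lemma part2:
  assumes "n \<ge> 1"
  shows "zeq (smul (-2) (\<Sum>i<n. zf (replicate i 2 @ [3] @ replicate (n - 1 - i) 2)))
             (smul 2 (\<Sum>i=1..n. smul ((-1) ^ i) (sh (zf [2 * i + 1]) (zf (replicate (n - i) 2)))))"
proof -
  obtain m0 where n: "n = Suc m0" using assms by (cases n) auto
  have SSeq: "(\<Sum>i<n. zf (replicate i 2 @ [3] @ replicate (n - 1 - i) 2)) = SS 3 (n - 1)"
    unfolding SS_def n lessThan_Suc_atMost by simp
  let ?T' = "\<Sum>i=1..n. smul ((-1) ^ i) (SS (2*i+1) (n-i) + BB (2*i+3) (n-i))"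
  have z1: "zeq (\<Sum>i=1..n. smul ((-1) ^ i) (sh (zf [2 * i + 1]) (zf (replicate (n - i) 2)))) ?T'"
    by (rule zeq_sum, rule zeq_smul, rule zeq_st) auto
  have T': "?T' = smul (-1) (SS 3 (n - 1))"
  proof
    fix w
    define F where "F j = (if j \<le> n then SS (2*j+1) (n-j) w else 0)" for j
    have a: "SS (2*i+1) (n-i) w = F i" if "i \<in> {1..n}" for i using that by (simp add: F_def)
    have b: "BB (2*i+3) (n-i) w = F (Suc i)" if "i \<in> {1..n}" for i
    proof (cases "i = n")
      case True then show ?thesis by (simp add: F_def BB_0)
    next
      case False
      with that have "i < n" by simp
      have e3: "2 * Suc i + 1 = 2*i+3" by simp
      have "F (Suc i) = SS (2*Suc i + 1) (n - Suc i) w"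
        unfolding F_def using \<open>i<n\<close> by (simp only: Suc_le_eq if_True)
      also have "\<dots> = SS (2*i+3) (n - Suc i) w" by (simp only: e3)
      finally show ?thesis using BB_SS[of "n-i" "2*i+3"] \<open>i<n\<close> by simp
    qed
    have "?T' w = (\<Sum>i=1..n. (-1)^i * (SS (2*i+1) (n-i) w + BB (2*i+3) (n-i) w))"
      by (simp add: sum_app smul_def)
    also have "\<dots> = (\<Sum>i=1..n. (-1)^i * (F i + F (Suc i)))"
      using a b by (intro sum.cong) auto
    also have "\<dots> = - F 1 + (-1)^n * F (Suc n)" by (rule tele)
    also have "\<dots> = - F 1" by (simp add: F_def)
    also have "\<dots> = smul (-1) (SS 3 (n - 1)) w" using assms by (simp add: F_def smul_def)
    finally show "?T' w = smul (-1) (SS 3 (n - 1)) w" .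
  qed
  have "zeq (smul 2 (\<Sum>i=1..n. smul ((-1) ^ i) (sh (zf [2 * i + 1]) (zf (replicate (n - i) 2)))))
            (smul 2 ?T')" by (rule zeq_smul[OF z1])
  moreover have "smul 2 ?T' = smul (-2) (\<Sum>i<n. zf (replicate i 2 @ [3] @ replicate (n - 1 - i) 2))"
    unfolding T' SSeq by (rule ext) (simp add: smul_def)
  ultimately show ?thesis by (simp add: zeq_sym)
qed

theorem mainTheorem11:
  fixes n :: nat
  assumes "n \<ge> 1"
  shows "zeq (wp (concat (replicate n [X0, X1]) @ [X0]))
             (smul (-2) (\<Sum>i<n. zf (replicate i 2 @ [3] @ replicate (n - 1 - i) 2)))
       \<and> zeq (smul (-2) (\<Sum>i<n. zf (replicate i 2 @ [3] @ replicate (n - 1 - i) 2)))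
             (smul 2 (\<Sum>i=1..n. smul ((-1) ^ i) (sh (zf [2 * i + 1]) (zf (replicate (n - i) 2)))))"
  using part1[OF assms] part2[OF assms] by blast


end
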